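(* Let $A$ be a finite alphabet and let $M,N$ be regular languages over $A(2,\$)$, each consisting of words of the form $(w_1,w_2)\delta_A^L$ with $w_1,w_2\in A^*$. Suppose there are constants $C,C'$ such that $(w_1,w_2)\delta_A^L\in M$ implies $||w_1|-|w_2||\leq C$, and $(w_1',w_2')\delta_A^L\in N$ implies $||w_1'|-|w_2'||\leq C'$. Then the language $M\odot' N=\{(w_1w_1',w_2w_2')\delta_A^L:(w_1,w_2)\delta_A^L\in M,\ (w_1',w_2')\delta_A^L\in N\}$ is regular.
   Context: $A^*$ is the free monoid on $A$, $|w|$ is length. Let $\$\notin A$ and $A(2,\$)=(A\cup\{\$\})^2\setminus\{(\$,\$)\}$. For $\alpha,\beta\in A^*$, $(\alpha,\beta)\delta_A^L$ is the word over $A(2,\$)$ obtained by padding the shorter of $\alpha,\beta$ on the left with $\$$'s to equal length and reading the pairs of letters position by position. Regular means accepted by a finite state automaton. *)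

theory Defs
  imports Main
begin

(* The padding symbol $ is represented by None; a letter a of A by Some a. *)

definition pad_alph :: "'a set \<Rightarrow> ('a option \<times> 'a option) set" where
  "pad_alph A = ((insert None (Some ` A)) \<times> (insert None (Some ` A))) - {(None, None)}"

definition deltaL :: "'a list \<Rightarrow> 'a list \<Rightarrow> ('a option \<times> 'a option) list" where
  "deltaL u v =
     (let n = max (length u) (length v) in
      zip (replicate (n - length u) None @ map Some u)
          (replicate (n - length v) None @ map Some v))"

definition regular :: "'s set \<Rightarrow> 's list set \<Rightarrow> bool" where
  "regular Sig L \<longleftrightarrow>
     (\<exists>(Q :: nat set) q0 (delta :: nat \<Rightarrow> 's \<Rightarrow> nat) F.
        finite Q \<and> q0 \<in> Q \<and> (\<forall>q\<in>Q. \<forall>x\<in>Sig. delta q x \<in> Q) \<and> F \<subseteq> Q \<and>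
        L = {w. set w \<subseteq> Sig \<and> foldl delta q0 w \<in> F})"

definition odot' :: "('a option \<times> 'a option) list set \<Rightarrow> ('a option \<times> 'a option) list set
                      \<Rightarrow> ('a option \<times> 'a option) list set" where
  "odot' M N = {deltaL (w1 @ w1') (w2 @ w2') | w1 w2 w1' w2'.
                   deltaL w1 w2 \<in> M \<and> deltaL w1' w2' \<in> N}"

end

theory Submission
  imports Defs
begin



definition res :: "'s list set \<Rightarrow> 's list \<Rightarrow> 's list set" where
  "res L w = {v. w @ v \<in> L}"

definition RF :: "'s set \<Rightarrow> 's list set \<Rightarrow> bool" where
  "RF Sig L \<longleftrightarrow> L \<subseteq> lists Sig \<and> finite (range (res L))"

lemma res_Nil[simp]: "res L [] = L" by (simp add: res_def)
lemma res_append: "res (res L u) w = res L (u @ w)" by (simp add: res_def)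

lemma regular_RF:
  assumes "regular Sig L" shows "RF Sig L"
proof -
  obtain Q q0 delta F where Q: "finite (Q::nat set)" "q0 \<in> Q" "\<forall>q\<in>Q. \<forall>x\<in>Sig. delta q x \<in> Q"
    "F \<subseteq> Q" and L: "L = {w. set w \<subseteq> Sig \<and> foldl delta q0 w \<in> F}"
    using assms unfolding regular_def by blast
  define R where "R q = {v. set v \<subseteq> Sig \<and> foldl delta q v \<in> F}" for q
  have cl: "foldl delta q w \<in> Q" if "q \<in> Q" "set w \<subseteq> Sig" for q w
    using that proof (induction w arbitrary: q)
    case Nil then show ?case by simp
  next
    case (Cons a w) then show ?case using Q(3) by simp
  qed
  have "range (res L) \<subseteq> insert {} (R ` Q)"
  proof
    fix X assume "X \<in> range (res L)"
    then obtain w where X: "X = res L w" by auto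
    show "X \<in> insert {} (R ` Q)"
    proof (cases "set w \<subseteq> Sig")
      case True
      then have "X = R (foldl delta q0 w)" unfolding X res_def R_def L by auto
      then show ?thesis using cl[OF Q(2) True] by auto
    next
      case False
      then have "X = {}" unfolding X res_def L by auto
      then show ?thesis by simp
    qed
  qed
  then have "finite (range (res L))" using Q(1) by (meson finite_imageI finite_insert finite_subset)
  moreover have "L \<subseteq> lists Sig" unfolding L by auto
  ultimately show ?thesis unfolding RF_def by simp
qed

definition dR :: "'s list set \<Rightarrow> 's \<Rightarrow> 's list set" where
  "dR X x = {v. x # v \<in> X}"

lemma foldl_dR: "foldl dR (res L u) w = res L (u @ w)"
proof (induction w arbitrary: u)
  case Nil then show ?case by simp
next
  case (Cons a w)
  have "dR (res L u) a = res L (u @ [a])" by (simp add: dR_def res_def)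
  then show ?case using Cons[of "u @ [a]"] by simp
qed

lemma RF_regular:
  assumes "RF Sig L" shows "regular Sig L"
proof -
  define R where "R = range (res L)"
  have fin: "finite R" and sub: "L \<subseteq> lists Sig" using assms unfolding RF_def R_def by auto
  obtain f :: "'a list set \<Rightarrow> nat" and n where f: "f ` R = {i. i < n}" "inj_on f R"
    using finite_imp_inj_to_nat_seg[OF fin] by blast
  define delta where "delta i x = f (dR (inv_into R f i) x)" for i x
  have dRR: "dR X x \<in> R" if "X \<in> R" for X x
    using that unfolding R_def by (auto simp: foldl_dR[of L _ "[x]", simplified])
  have fold: "foldl delta (f X) w = f (foldl dR X w)" if "X \<in> R" for X w
    using that proof (induction w arbitrary: X)
    case Nil then show ?case by simp
  next
    case (Cons a w)
    have "delta (f X) a = f (dR X a)" unfolding delta_def using Cons.prems f(2) by simp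
    then show ?case using Cons.IH[OF dRR[OF Cons.prems]] by simp
  qed
  have LR: "L \<in> R" unfolding R_def using res_Nil[of L] by (metis rangeI)
  show ?thesis unfolding regular_def
  proof (intro exI conjI)
    show "finite (f ` R)" using fin by simp
    show "f L \<in> f ` R" using LR by simp
    show "\<forall>q\<in>f ` R. \<forall>x\<in>Sig. delta q x \<in> f ` R"
      using dRR f(2) unfolding delta_def by auto
    show "f ` {X \<in> R. [] \<in> X} \<subseteq> f ` R" by auto
    show "L = {w. set w \<subseteq> Sig \<and> foldl delta (f L) w \<in> f ` {X \<in> R. [] \<in> X}}"
    proof -
      have "foldl delta (f L) w \<in> f ` {X \<in> R. [] \<in> X} \<longleftrightarrow> w \<in> L" for w
      proof -
        have e: "foldl delta (f L) w = f (res L w)"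
          using fold[OF LR, of w] foldl_dR[of L "[]" w] by simp
        have rR: "res L w \<in> R" unfolding R_def by simp
        have "f (res L w) \<in> f ` {X \<in> R. [] \<in> X} \<longleftrightarrow> [] \<in> res L w"
          using f(2) rR by (auto dest: inj_onD)
        then show ?thesis using e by (simp add: res_def)
      qed
      then show ?thesis using sub by auto
    qed
  qed
qed


lemma fin_sub: "A \<subseteq> f ` B \<Longrightarrow> finite B \<Longrightarrow> finite A"
  by (meson finite_imageI finite_subset)

lemma fin_sub2: "A \<subseteq> insert a (f ` B) \<Longrightarrow> finite B \<Longrightarrow> finite A"
  by (meson finite_imageI finite_insert finite_subset)

lemma RF_empty: "RF Sig {}"
proof -
  have "range (res ({}::'a list set)) = {{}}" by (auto simp: res_def)
  then show ?thesis unfolding RF_def by simp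
qed

lemma RF_Un: assumes "RF Sig L1" "RF Sig L2" shows "RF Sig (L1 \<union> L2)"
proof -
  have "res (L1 \<union> L2) w = (\<lambda>(X,Y). X \<union> Y) (res L1 w, res L2 w)" for w
    by (auto simp: res_def)
  note that' = this
  have "range (res (L1 \<union> L2)) \<subseteq> (\<lambda>(X,Y). X \<union> Y) ` (range (res L1) \<times> range (res L2))"
  proof
    fix Z assume "Z \<in> range (res (L1 \<union> L2))"
    then obtain w where "Z = res (L1 \<union> L2) w" by auto
    with that' show "Z \<in> (\<lambda>(X,Y). X \<union> Y) ` (range (res L1) \<times> range (res L2))"
      by (intro image_eqI[where x="(res L1 w, res L2 w)"]) auto
  qed
  from fin_sub[OF this] assms show ?thesis unfolding RF_def by auto
qed

lemma RF_Int: assumes "RF Sig L1" "RF Sig L2" shows "RF Sig (L1 \<inter> L2)"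
proof -
  have "res (L1 \<inter> L2) w = (\<lambda>(X,Y). X \<inter> Y) (res L1 w, res L2 w)" for w
    by (auto simp: res_def)
  note that' = this
  have "range (res (L1 \<inter> L2)) \<subseteq> (\<lambda>(X,Y). X \<inter> Y) ` (range (res L1) \<times> range (res L2))"
  proof
    fix Z assume "Z \<in> range (res (L1 \<inter> L2))"
    then obtain w where "Z = res (L1 \<inter> L2) w" by auto
    with that' show "Z \<in> (\<lambda>(X,Y). X \<inter> Y) ` (range (res L1) \<times> range (res L2))"
      by (intro image_eqI[where x="(res L1 w, res L2 w)"]) auto
  qed
  from fin_sub[OF this] assms show ?thesis unfolding RF_def by auto
qed

lemma RF_UN: assumes "finite I" "\<And>i. i \<in> I \<Longrightarrow> RF Sig (L i)" shows "RF Sig (\<Union>i\<in>I. L i)"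
  using assms
proof (induction I rule: finite_induct)
  case empty then show ?case using RF_empty by simp
next
  case (insert x F)
  then show ?case using RF_Un[of Sig "L x" "\<Union>i\<in>F. L i"] by simp
qed

lemma RF_res: assumes "RF Sig L" shows "RF Sig (res L u)"
proof -
  have "range (res (res L u)) \<subseteq> range (res L)" by (auto simp: res_append)
  moreover have "res L u \<subseteq> lists Sig" using assms unfolding RF_def res_def by auto
  ultimately show ?thesis using assms unfolding RF_def by (meson finite_subset)
qed

lemma RF_lists: assumes "T \<subseteq> Sig" shows "RF Sig (lists T)"
proof -
  have "range (res (lists T)) \<subseteq> {lists T, {}}" by (auto simp: res_def)
  then have "finite (range (res (lists T)))" by (meson finite.emptyI finite_insert finite_subset)
  then show ?thesis using assms unfolding RF_def by auto
qed

definition cc :: "'s list set \<Rightarrow> 's list set \<Rightarrow> 's list set" where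
  "cc L1 L2 = {x @ y | x y. x \<in> L1 \<and> y \<in> L2}"

lemma res_cc: "res (cc L1 L2) w = cc (res L1 w) L2 \<union> \<Union> {res L2 us | us. \<exists>x \<in> L1. w = x @ us}"
proof (intro set_eqI iffI)
  fix v assume "v \<in> res (cc L1 L2) w"
  then obtain x y where xy: "x \<in> L1" "y \<in> L2" "w @ v = x @ y" by (auto simp: res_def cc_def)
  then obtain us where "(w = x @ us \<and> us @ v = y) \<or> (w @ us = x \<and> v = us @ y)"
    using append_eq_append_conv2[of w v x y] by blast
  then show "v \<in> cc (res L1 w) L2 \<union> \<Union> {res L2 us | us. \<exists>x \<in> L1. w = x @ us}"
  proof
    assume a: "w = x @ us \<and> us @ v = y"
    then have "v \<in> res L2 us" using xy by (simp add: res_def)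
    moreover have "\<exists>x \<in> L1. w = x @ us" using a xy by blast
    ultimately show ?thesis by blast
  next
    assume a: "w @ us = x \<and> v = us @ y"
    then have "us \<in> res L1 w" using xy by (simp add: res_def)
    then show ?thesis using a xy unfolding cc_def by blast
  qed
next
  fix v assume "v \<in> cc (res L1 w) L2 \<union> \<Union> {res L2 us | us. \<exists>x \<in> L1. w = x @ us}"
  then show "v \<in> res (cc L1 L2) w" unfolding res_def cc_def
    by (auto, metis append_assoc, metis append_assoc)
qed

lemma RF_cc: assumes "RF Sig L1" "RF Sig L2" shows "RF Sig (cc L1 L2)"
proof -
  have sub: "range (res (cc L1 L2)) \<subseteq> (\<lambda>(X,Y). cc X L2 \<union> \<Union>Y) ` (range (res L1) \<times> Pow (range (res L2)))"
  proof
    fix Z assume "Z \<in> range (res (cc L1 L2))"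
    then obtain w where "Z = res (cc L1 L2) w" by auto
    then have "Z = (\<lambda>(X,Y). cc X L2 \<union> \<Union>Y) (res L1 w, {res L2 us | us. \<exists>x \<in> L1. w = x @ us})"
      by (simp add: res_cc)
    moreover have "(res L1 w, {res L2 us | us. \<exists>x \<in> L1. w = x @ us}) \<in> range (res L1) \<times> Pow (range (res L2))"
      by auto
    ultimately show "Z \<in> (\<lambda>(X,Y). cc X L2 \<union> \<Union>Y) ` (range (res L1) \<times> Pow (range (res L2)))"
      by (rule image_eqI)
  qed
  have l: "cc L1 L2 \<subseteq> lists Sig"
  proof
    fix z assume "z \<in> cc L1 L2"
    then obtain x y where "z = x @ y" "x \<in> L1" "y \<in> L2" unfolding cc_def by blast
    then show "z \<in> lists Sig" using assms unfolding RF_def by auto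
  qed
  have f: "finite (range (res L1) \<times> Pow (range (res L2)))" using assms unfolding RF_def by simp
  show ?thesis unfolding RF_def using l fin_sub[OF sub f] by blast
qed

definition swL :: "('b \<times> 'b) list set \<Rightarrow> ('b \<times> 'b) list set" where
  "swL L = map prod.swap ` L"

lemma RF_swL: assumes "RF Sig L" "prod.swap ` Sig \<subseteq> Sig" shows "RF Sig (swL L)"
proof -
  have r: "res (swL L) w = swL (res L (map prod.swap w))" for w
  proof (intro set_eqI iffI)
    fix v assume "v \<in> res (swL L) w"
    then obtain z where z: "z \<in> L" "w @ v = map prod.swap z" unfolding res_def swL_def by blast
    then have "map prod.swap (w @ v) = map prod.swap (map prod.swap z)" by simp
    then have "z = map prod.swap w @ map prod.swap v" by (simp add: comp_def)
    then have "map prod.swap v \<in> res L (map prod.swap w)" using z(1) unfolding res_def by simp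
    moreover have "v = map prod.swap (map prod.swap v)" by (simp add: comp_def)
    ultimately show "v \<in> swL (res L (map prod.swap w))" unfolding swL_def by (rule rev_image_eqI)
  next
    fix v assume "v \<in> swL (res L (map prod.swap w))"
    then obtain z where z: "map prod.swap w @ z \<in> L" "v = map prod.swap z" unfolding res_def swL_def by blast
    then have e: "w @ v = map prod.swap (map prod.swap w @ z)" by (simp add: comp_def)
    have "w @ v \<in> map prod.swap ` L" using e z(1) by (rule image_eqI[where f="map prod.swap"])
    then show "v \<in> res (swL L) w" unfolding res_def swL_def by simp
  qed
  have sub: "range (res (swL L)) \<subseteq> swL ` range (res L)"
  proof
    fix Z assume "Z \<in> range (res (swL L))"
    then obtain w where "Z = res (swL L) w" by blast
    then have "Z = swL (res L (map prod.swap w))" using r by simp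
    then show "Z \<in> swL ` range (res L)" by blast
  qed
  have l: "swL L \<subseteq> lists Sig"
  proof
    fix z assume "z \<in> swL L"
    then obtain y where y: "y \<in> L" "z = map prod.swap y" unfolding swL_def by blast
    then have "set y \<subseteq> Sig" using assms(1) unfolding RF_def by auto
    then have "set z \<subseteq> Sig" using y(2) assms(2) by auto
    then show "z \<in> lists Sig" by auto
  qed
  have f: "finite (range (res L))" using assms unfolding RF_def by simp
  show ?thesis unfolding RF_def using l fin_sub[OF sub f] by blast
qed

fun outw :: "('s \<Rightarrow> 'b \<Rightarrow> 's) \<Rightarrow> ('s \<Rightarrow> 'b \<Rightarrow> 'c list) \<Rightarrow> 's \<Rightarrow> 'b list \<Rightarrow> 'c list" where
  "outw tr out s [] = []"
| "outw tr out s (a # n) = out s a @ outw tr out (tr s a) n"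

lemma outw_append: "outw tr out s (w @ v) = outw tr out s w @ outw tr out (foldl tr s w) v"
  by (induction w arbitrary: s) auto

lemma RF_mealy:
  assumes "finite S" "s0 \<in> S" "\<forall>s\<in>S. \<forall>a\<in>Sig. tr s a \<in> S" "RF Sig' M"
  shows "RF Sig {n \<in> lists Sig. foldl tr s0 n \<in> G \<and> outw tr out s0 n \<in> M}"
proof -
  let ?L = "{n \<in> lists Sig. foldl tr s0 n \<in> G \<and> outw tr out s0 n \<in> M}"
  define H where "H s R = {v \<in> lists Sig. foldl tr s v \<in> G \<and> outw tr out s v \<in> R}" for s R
  have cl: "foldl tr s w \<in> S" if "s \<in> S" "w \<in> lists Sig" for s w
    using that proof (induction w arbitrary: s)
    case Nil then show ?case by simp
  next
    case (Cons a w) then show ?case using assms(3) by simp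
  qed
  have sub: "range (res ?L) \<subseteq> insert {} ((\<lambda>(s,R). H s R) ` (S \<times> range (res M)))"
  proof
    fix X assume "X \<in> range (res ?L)"
    then obtain w where X: "X = res ?L w" by auto
    show "X \<in> insert {} ((\<lambda>(s,R). H s R) ` (S \<times> range (res M)))"
    proof (cases "w \<in> lists Sig")
      case True
      have "X = H (foldl tr s0 w) (res M (outw tr out s0 w))"
        unfolding X
      proof (intro set_eqI)
        fix v
        show "v \<in> res ?L w \<longleftrightarrow> v \<in> H (foldl tr s0 w) (res M (outw tr out s0 w))"
          using True unfolding res_def H_def by (simp add: outw_append)
      qed
      then show ?thesis using cl[OF assms(2) True] by auto
    next
      case False
      have "X = {}" unfolding X res_def using False by auto
      then show ?thesis by simp
    qed
  qed
  have f: "finite (S \<times> range (res M))" using assms unfolding RF_def by simp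
  have l: "?L \<subseteq> lists Sig" by auto
  show ?thesis unfolding RF_def using l fin_sub2[OF sub f] by blast
qed



lemma dL_ge: "length v \<le> length u \<Longrightarrow>
  deltaL u v = zip (map Some u) (replicate (length u - length v) None @ map Some v)"
  by (simp add: deltaL_def max_def)

lemma dL_le: "length u \<le> length v \<Longrightarrow>
  deltaL u v = zip (replicate (length v - length u) None @ map Some u) (map Some v)"
  by (simp add: deltaL_def max_def)

lemma length_dL[simp]: "length (deltaL u v) = max (length u) (length v)"
  by (simp add: deltaL_def Let_def)

lemma fst_dL: "map fst (deltaL u v) = replicate (max (length u) (length v) - length u) None @ map Some u"
  by (simp add: deltaL_def Let_def)

lemma snd_dL: "map snd (deltaL u v) = replicate (max (length u) (length v) - length v) None @ map Some v"
  by (simp add: deltaL_def Let_def)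

definition unpad :: "'a option list \<Rightarrow> 'a list" where
  "unpad xs = map the (filter (\<lambda>x. x \<noteq> None) xs)"

lemma unpad_pad[simp]: "unpad (replicate k None @ map Some u) = u"
  by (simp add: unpad_def comp_def filter_map)

lemma unpad_fst: "unpad (map fst (deltaL u v)) = u" by (simp only: fst_dL unpad_pad)
lemma unpad_snd: "unpad (map snd (deltaL u v)) = v" by (simp only: snd_dL unpad_pad)

lemma dL_inj: "deltaL u v = deltaL u' v' \<Longrightarrow> u = u' \<and> v = v'"
  by (metis unpad_fst unpad_snd)

lemma map_swap_zip: "map prod.swap (zip a b) = zip b a"
proof (induction a arbitrary: b)
  case Nil then show ?case by simp
next
  case (Cons x a) then show ?case by (cases b) auto
qed

lemma dL_swap: "map prod.swap (deltaL u v) = deltaL v u"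
proof (cases "length v \<le> length u")
  case True
  show ?thesis unfolding dL_ge[OF True] dL_le[OF True] map_swap_zip ..
next
  case False
  then have F: "length u \<le> length v" by simp
  show ?thesis unfolding dL_ge[OF F] dL_le[OF F] map_swap_zip ..
qed

lemma dL_eq: "length r = length s \<Longrightarrow> deltaL r s = zip (map Some r) (map Some s)"
  by (simp add: dL_ge)

lemma dL_app: "length r = length s \<Longrightarrow> deltaL x y @ deltaL r s = deltaL (x @ r) (y @ s)"
proof (cases "length y \<le> length x")
  case True
  assume l: "length r = length s"
  have "zip (map Some x) (replicate (length x - length y) None @ map Some y) @ zip (map Some r) (map Some s)
     = zip (map Some x @ map Some r) ((replicate (length x - length y) None @ map Some y) @ map Some s)"
    by (rule zip_append[symmetric]) (use True in simp)
  then show ?thesis using True l by (simp add: dL_ge dL_eq)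
next
  case False
  assume l: "length r = length s"
  have "zip (replicate (length y - length x) None @ map Some x) (map Some y) @ zip (map Some r) (map Some s)
     = zip ((replicate (length y - length x) None @ map Some x) @ map Some r) (map Some y @ map Some s)"
    by (rule zip_append[symmetric]) (use False in simp)
  then show ?thesis using False l by (simp add: dL_le dL_eq)
qed

lemma dL_padT: "length r = length s \<Longrightarrow>
   zip (map Some a) (replicate (length a) None) @ deltaL r s = deltaL (a @ r) s"
  by (simp add: dL_ge dL_eq)

lemma dL_padB: "length r = length s \<Longrightarrow>
   zip (replicate (length b) None) (map Some b) @ deltaL r s = deltaL r (b @ s)"
  by (simp add: dL_le dL_eq)

lemma dL_set: "set (deltaL u v) \<subseteq> pad_alph A \<longleftrightarrow> set u \<subseteq> A \<and> set v \<subseteq> A"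
proof
  assume a: "set (deltaL u v) \<subseteq> pad_alph A"
  have "set (map fst (deltaL u v)) \<subseteq> insert None (Some ` A)"
    using a unfolding pad_alph_def by auto
  then have 1: "set u \<subseteq> A" unfolding fst_dL by auto
  have "set (map snd (deltaL u v)) \<subseteq> insert None (Some ` A)"
    using a unfolding pad_alph_def by auto
  then have 2: "set v \<subseteq> A" unfolding snd_dL by auto
  show "set u \<subseteq> A \<and> set v \<subseteq> A" using 1 2 by simp
next
  assume a: "set u \<subseteq> A \<and> set v \<subseteq> A"
  show "set (deltaL u v) \<subseteq> pad_alph A"
  proof
    fix p assume p: "p \<in> set (deltaL u v)"
    have f: "fst p \<in> set (map fst (deltaL u v))" "snd p \<in> set (map snd (deltaL u v))"
      using p by force+
    then have "fst p \<in> insert None (Some ` A)" "snd p \<in> insert None (Some ` A)"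
      using a unfolding fst_dL snd_dL by (auto split: if_splits)
    moreover have "p \<noteq> (None, None)"
    proof (cases "length v \<le> length u")
      case True
      then have "fst p \<in> set (map Some u)" using f(1) by (simp add: fst_dL max_def)
      then show ?thesis by auto
    next
      case False
      then have "snd p \<in> set (map Some v)" using f(2) by (simp add: snd_dL max_def)
      then show ?thesis by auto
    qed
    ultimately show "p \<in> pad_alph A" unfolding pad_alph_def by (cases p) auto
  qed
qed

lemma aligned_dL:
  assumes "\<forall>p\<in>set s. fst p \<noteq> None \<and> snd p \<noteq> None"
  shows "\<exists>r t. length r = length t \<and> s = deltaL r t"
proof (intro exI conjI)
  show "length (map (the \<circ> fst) s) = length (map (the \<circ> snd) s)" by simp
  have "map Some (map (the \<circ> fst) s) = map fst s" using assms by (induction s) auto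
  moreover have "map Some (map (the \<circ> snd) s) = map snd s" using assms by (induction s) auto
  ultimately have "deltaL (map (the \<circ> fst) s) (map (the \<circ> snd) s) = zip (map fst s) (map snd s)"
    by (simp only: dL_eq length_map)
  then show "s = deltaL (map (the \<circ> fst) s) (map (the \<circ> snd) s)"
    by (simp only: zip_map_fst_snd)
qed



definition trm :: "(('a option \<times> 'a option) option \<times> ('a option \<times> 'a option) option)
   \<Rightarrow> ('a option \<times> 'a option) \<Rightarrow> (('a option \<times> 'a option) option \<times> ('a option \<times> 'a option) option)" where
  "trm s a = (if fst s = None then Some a else fst s, Some a)"

definition out1 :: "(('a option \<times> 'a option) option \<times> ('a option \<times> 'a option) option)
   \<Rightarrow> ('a option \<times> 'a option) \<Rightarrow> ('a option \<times> 'a option) list" where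
  "out1 s a = [(case snd s of None \<Rightarrow> None | Some p \<Rightarrow> fst p, snd a)]"

definition out2 :: "(('a option \<times> 'a option) option \<times> ('a option \<times> 'a option) option)
   \<Rightarrow> ('a option \<times> 'a option) \<Rightarrow> ('a option \<times> 'a option) list" where
  "out2 s a = (case snd s of None \<Rightarrow> [] | Some p \<Rightarrow> [(fst p, snd a)])"

definition g1 :: "('a option \<times> 'a option) list \<Rightarrow> ('a option \<times> 'a option) list" where
  "g1 n = zip (None # butlast (map fst n)) (map snd n)"
definition g2 :: "('a option \<times> 'a option) list \<Rightarrow> ('a option \<times> 'a option) list" where
  "g2 n = zip (butlast (map fst n)) (tl (map snd n))"
definition f1 :: "'a \<Rightarrow> ('a option \<times> 'a option) list \<Rightarrow> ('a option \<times> 'a option) list" where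
  "f1 x m = zip (tl (map fst m) @ [Some x]) (map snd m)"
definition f2 :: "'a \<Rightarrow> ('a option \<times> 'a option) list \<Rightarrow> ('a option \<times> 'a option) list" where
  "f2 x m = zip (map fst m @ [Some x]) (None # map snd m)"

lemma run_trm: "foldl trm s n = (if n = [] then s else (if fst s = None then Some (hd n) else fst s, Some (last n)))"
proof (induction n arbitrary: s)
  case Nil then show ?case by simp
next
  case (Cons a n) then show ?case by (simp add: trm_def)
qed

lemma outw_out1: "outw trm out1 s n = zip ((case snd s of None \<Rightarrow> None | Some p \<Rightarrow> fst p) # butlast (map fst n)) (map snd n)"
proof (induction n arbitrary: s)
  case Nil then show ?case by simp
next
  case (Cons a n)
  have "outw trm out1 s (a # n) = ((case snd s of None \<Rightarrow> None | Some p \<Rightarrow> fst p), snd a) #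
      zip (fst a # butlast (map fst n)) (map snd n)"
  proof -
    have e: "(case snd (trm s a) of None \<Rightarrow> None | Some p \<Rightarrow> fst p) = fst a" by (simp add: trm_def)
    have "outw trm out1 s (a # n) = out1 s a @ outw trm out1 (trm s a) n" by simp
    moreover have "out1 s a = [((case snd s of None \<Rightarrow> None | Some p \<Rightarrow> fst p), snd a)]" by (simp add: out1_def)
    ultimately show ?thesis using Cons.IH[of "trm s a"] e by simp
  qed
  then show ?case by (cases n) auto
qed

lemma outw_out2_Some: "snd s \<noteq> None \<Longrightarrow> outw trm out2 s n = outw trm out1 s n"
proof (induction n arbitrary: s)
  case Nil then show ?case by simp
next
  case (Cons a n)
  have "out2 s a = out1 s a" using Cons.prems by (auto simp: out1_def out2_def)
  moreover have "snd (trm s a) \<noteq> None" by (simp add: trm_def)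
  ultimately show ?case using Cons.IH by simp
qed

lemma outw1_g1: "outw trm out1 (None, None) n = g1 n"
  by (simp add: outw_out1 g1_def)

lemma outw2_g2: "outw trm out2 (None, None) n = g2 n"
proof (cases n)
  case Nil then show ?thesis by (simp add: g2_def)
next
  case (Cons a n')
  have "outw trm out2 (None, None) n = outw trm out2 (Some a, Some a) n'"
    using Cons by (simp add: out2_def trm_def)
  also have "\<dots> = outw trm out1 (Some a, Some a) n'" by (rule outw_out2_Some) simp
  also have "\<dots> = zip (fst a # butlast (map fst n')) (map snd n')" by (simp add: outw_out1)
  also have "\<dots> = g2 n" using Cons by (cases n') (simp_all add: g2_def)
  finally show ?thesis .
qed

lemma K1: "length w1 < length w2 \<Longrightarrow> deltaL (w1 @ [x]) w2 = f1 x (deltaL w1 w2)"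
proof -
  assume l: "length w1 < length w2"
  obtain k where k: "length w2 - length w1 = Suc k" using l by (metis Suc_diff_Suc)
  have k2: "length w2 - length (w1 @ [x]) = k" using k by simp
  have l2: "length (w1 @ [x]) \<le> length w2" using l by simp
  have a: "deltaL (w1 @ [x]) w2 = zip (replicate k None @ map Some w1 @ [Some x]) (map Some w2)"
    using dL_le[OF l2] k2 by simp
  have "map fst (deltaL w1 w2) = replicate (Suc k) None @ map Some w1"
    using l k by (simp add: fst_dL max_def)
  then have t: "tl (map fst (deltaL w1 w2)) = replicate k None @ map Some w1" by simp
  have s: "map snd (deltaL w1 w2) = map Some w2" using l by (simp add: snd_dL max_def)
  show ?thesis unfolding a f1_def t s by simp
qed

lemma K2: "length w2 \<le> length w1 \<Longrightarrow> deltaL (w1 @ [x]) w2 = f2 x (deltaL w1 w2)"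
proof -
  assume l: "length w2 \<le> length w1"
  have a: "deltaL (w1 @ [x]) w2 = zip (map Some w1 @ [Some x]) (None # replicate (length w1 - length w2) None @ map Some w2)"
    using l by (simp add: dL_ge Suc_diff_le)
  have "map fst (deltaL w1 w2) = map Some w1"
    using l by (simp add: fst_dL max_def)
  moreover have "map snd (deltaL w1 w2) = replicate (length w1 - length w2) None @ map Some w2" using l by (simp add: snd_dL max_def)
  ultimately show ?thesis unfolding a f2_def by simp
qed

lemma K3: "m \<noteq> [] \<Longrightarrow> fst (hd m) = None \<Longrightarrow> g1 (f1 x m) = m"
proof -
  assume m: "m \<noteq> []" "fst (hd m) = None"
  have l: "length (tl (map fst m) @ [Some x]) = length (map snd m)" using m by simp
  have "None # tl (map fst m) = map fst m" using m by (cases m) auto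
  then show ?thesis unfolding g1_def f1_def using l by (simp add: zip_map_fst_snd)
qed

lemma K4: "n \<noteq> [] \<Longrightarrow> fst (last n) = Some x \<Longrightarrow> f1 x (g1 n) = n"
proof -
  assume n: "n \<noteq> []" "fst (last n) = Some x"
  have l: "length (None # butlast (map fst n)) = length (map snd n)" using n by simp
  have "butlast (map fst n) @ [Some x] = map fst n"
    using n by (metis append_butlast_last_id last_map map_is_Nil_conv)
  then show ?thesis unfolding g1_def f1_def using l by (simp add: zip_map_fst_snd)
qed

lemma K5: "g2 (f2 x m) = m"
proof -
  have l: "length (map fst m @ [Some x]) = length (None # map snd m)" by simp
  then show ?thesis unfolding g2_def f2_def by (simp add: zip_map_fst_snd)
qed

lemma K6: "n \<noteq> [] \<Longrightarrow> fst (last n) = Some x \<Longrightarrow> snd (hd n) = None \<Longrightarrow> f2 x (g2 n) = n"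
proof -
  assume n: "n \<noteq> []" "fst (last n) = Some x" "snd (hd n) = None"
  have l: "length (butlast (map fst n)) = length (tl (map snd n))" by simp
  have "butlast (map fst n) @ [Some x] = map fst n"
    using n by (metis append_butlast_last_id last_map map_is_Nil_conv)
  moreover have "None # tl (map snd n) = map snd n" using n by (cases n) auto
  ultimately show ?thesis unfolding g2_def f2_def using l by (simp add: zip_map_fst_snd)
qed

lemma hd_dL_lt: "length w1 < length w2 \<Longrightarrow> deltaL w1 w2 \<noteq> [] \<and> fst (hd (deltaL w1 w2)) = None"
proof -
  assume l: "length w1 < length w2"
  have "length (deltaL w1 w2) > 0" using l by (cases w2) (auto simp: max_def)
  then have ne: "deltaL w1 w2 \<noteq> []" by blast
  obtain k where k: "length w2 - length w1 = Suc k" using l by (metis Suc_diff_Suc)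
  have "map fst (deltaL w1 w2) = replicate (Suc k) None @ map Some w1"
    using l k by (simp add: fst_dL max_def)
  then have "hd (map fst (deltaL w1 w2)) = None" by simp
  then show ?thesis using ne by (simp add: hd_map)
qed

lemma hd_dL_ge: "length w2 \<le> length w1 \<Longrightarrow> w1 \<noteq> [] \<Longrightarrow> fst (hd (deltaL w1 w2)) \<noteq> None"
proof -
  assume l: "length w2 \<le> length w1" "w1 \<noteq> []"
  have "length (deltaL w1 w2) > 0" using l by (cases w1) (auto simp: max_def)
  then have ne: "deltaL w1 w2 \<noteq> []" by blast
  have "map fst (deltaL w1 w2) = map Some w1"
    using l by (simp add: fst_dL max_def)
  then have "hd (map fst (deltaL w1 w2)) \<noteq> None" using l by (cases w1) auto
  then show ?thesis using ne by (simp add: hd_map)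
qed

definition ApT :: "'a list \<Rightarrow> ('a option \<times> 'a option) list set \<Rightarrow> ('a option \<times> 'a option) list set" where
  "ApT a M = {deltaL (w1 @ a) w2 | w1 w2. deltaL w1 w2 \<in> M}"

definition GF1 :: "'a \<Rightarrow> (('a option \<times> 'a option) option \<times> ('a option \<times> 'a option) option) set" where
  "GF1 x = {s. \<exists>p. snd s = Some p \<and> fst p = Some x}"
definition GF2 :: "'a \<Rightarrow> (('a option \<times> 'a option) option \<times> ('a option \<times> 'a option) option) set" where
  "GF2 x = {s. \<exists>p q. fst s = Some p \<and> snd p = None \<and> snd s = Some q \<and> fst q = Some x}"

lemma GF1_mem: "foldl trm (None, None) n \<in> GF1 x \<longleftrightarrow> n \<noteq> [] \<and> fst (last n) = Some x"
  by (cases "last n") (auto simp: run_trm GF1_def)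
lemma GF2_mem: "foldl trm (None, None) n \<in> GF2 x \<longleftrightarrow> n \<noteq> [] \<and> snd (hd n) = None \<and> fst (last n) = Some x"
  by (cases "last n"; cases "hd n") (auto simp: run_trm GF2_def)

lemma last_dL_app: "deltaL (w1 @ [x]) w2 \<noteq> [] \<and> fst (last (deltaL (w1 @ [x]) w2)) = Some x"
proof -
  let ?n = "deltaL (w1 @ [x]) w2"
  have "length ?n > 0" by simp
  then have ne: "?n \<noteq> []" by blast
  have "last (map fst ?n) = Some x" unfolding fst_dL by simp
  then show ?thesis using ne by (simp add: last_map)
qed

lemma hd_dL_app: "length w2 \<le> length w1 \<Longrightarrow> snd (hd (deltaL (w1 @ [x]) w2)) = None"
proof -
  assume l: "length w2 \<le> length w1"
  let ?n = "deltaL (w1 @ [x]) w2"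
  have "length ?n > 0" by simp
  then have ne: "?n \<noteq> []" by blast
  obtain k where k: "max (length (w1 @ [x])) (length w2) - length w2 = Suc k" using l
    by (metis Suc_diff_le length_append_singleton max.absorb1 max.cobounded2 le_SucI)
  have "hd (map snd ?n) = None" unfolding snd_dL k by simp
  then show ?thesis using ne by (simp add: hd_map)
qed

lemma ApT1_eq:
  assumes MD: "M \<subseteq> {deltaL u v | u v. True}" and Ml: "M \<subseteq> lists (pad_alph A)" and x: "x \<in> A"
  shows "ApT [x] M =
     {n \<in> lists (pad_alph A). foldl trm (None, None) n \<in> GF1 x \<and> outw trm out1 (None, None) n \<in> M}
   \<union> {n \<in> lists (pad_alph A). foldl trm (None, None) n \<in> GF2 x \<and> outw trm out2 (None, None) n \<in> M}"
    (is "_ = ?G1 \<union> ?G2")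
proof (intro set_eqI iffI)
  fix n assume "n \<in> ApT [x] M"
  then obtain w1 w2 where n: "n = deltaL (w1 @ [x]) w2" and m: "deltaL w1 w2 \<in> M"
    unfolding ApT_def by blast
  have "set (deltaL w1 w2) \<subseteq> pad_alph A" using m Ml by auto
  then have "set w1 \<subseteq> A \<and> set w2 \<subseteq> A" by (simp add: dL_set)
  then have "set (w1 @ [x]) \<subseteq> A \<and> set w2 \<subseteq> A" using x by simp
  then have nl: "n \<in> lists (pad_alph A)" unfolding n using dL_set[of "w1 @ [x]" w2 A] by auto
  have ln: "n \<noteq> [] \<and> fst (last n) = Some x" unfolding n by (rule last_dL_app)
  show "n \<in> ?G1 \<union> ?G2"
  proof (cases "length w1 < length w2")
    case True
    have "n = f1 x (deltaL w1 w2)" unfolding n using True by (rule K1)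
    then have "g1 n = deltaL w1 w2" using hd_dL_lt[OF True] K3 by metis
    then show ?thesis using nl ln m by (simp add: GF1_mem outw1_g1)
  next
    case False
    then have F: "length w2 \<le> length w1" by simp
    have "n = f2 x (deltaL w1 w2)" unfolding n using F by (rule K2)
    then have "g2 n = deltaL w1 w2" using K5 by metis
    moreover have "snd (hd n) = None" unfolding n using F by (rule hd_dL_app)
    ultimately show ?thesis using nl ln m by (simp add: GF2_mem outw2_g2)
  qed
next
  fix n assume "n \<in> ?G1 \<union> ?G2"
  then show "n \<in> ApT [x] M"
  proof
    assume "n \<in> ?G1"
    then have nl: "n \<in> lists (pad_alph A)" and ln: "n \<noteq> [] \<and> fst (last n) = Some x" and gm: "g1 n \<in> M"
      by (auto simp: GF1_mem outw1_g1)
    obtain w1 w2 where w: "g1 n = deltaL w1 w2" using gm MD by blast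
    have "g1 n \<noteq> []" using ln by (cases n) (auto simp: g1_def)
    moreover have "fst (hd (g1 n)) = None" using ln by (cases n) (auto simp: g1_def)
    ultimately have h: "deltaL w1 w2 \<noteq> []" "fst (hd (deltaL w1 w2)) = None" using w by auto
    have lt: "length w1 < length w2"
    proof (rule ccontr)
      assume "\<not> length w1 < length w2"
      then have F: "length w2 \<le> length w1" by simp
      show False
      proof (cases "w1 = []")
        case True
        then have "w2 = []" using F by simp
        then show False using h True by (simp add: deltaL_def)
      next
        case False
        then show False using hd_dL_ge[OF F False] h by simp
      qed
    qed
    have "deltaL (w1 @ [x]) w2 = n" using K1[OF lt] K4 ln w by metis
    moreover have "deltaL w1 w2 \<in> M" using gm w by simp
    ultimately show ?thesis unfolding ApT_def by blast
  next
    assume "n \<in> ?G2"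
    then have nl: "n \<in> lists (pad_alph A)" and ln: "n \<noteq> [] \<and> snd (hd n) = None \<and> fst (last n) = Some x"
      and gm: "g2 n \<in> M"
      by (auto simp: GF2_mem outw2_g2)
    obtain w1 w2 where w: "g2 n = deltaL w1 w2" using gm MD by blast
    show ?thesis
    proof (cases "length w1 < length w2")
      case True
      have h: "g2 n \<noteq> [] \<and> fst (hd (g2 n)) = None" using hd_dL_lt[OF True] w by simp
      then obtain a b n' where nn: "n = a # b # n'" unfolding g2_def by (cases n rule: remdups_adj.cases) auto
      have "fst (hd (g2 n)) = fst a" unfolding nn g2_def by simp
      then have "a = (None, None)" using h ln nn by (cases a) auto
      moreover have "a \<in> pad_alph A" using nl nn by simp
      ultimately show ?thesis unfolding pad_alph_def by simp
    next
      case False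
      then have F: "length w2 \<le> length w1" by simp
      have "deltaL (w1 @ [x]) w2 = n" using K2[OF F] K6 ln w by metis
      moreover have "deltaL w1 w2 \<in> M" using gm w by simp
    ultimately show ?thesis unfolding ApT_def by blast
    qed
  qed
qed

lemma finite_pad: "finite A \<Longrightarrow> finite (pad_alph A)"
  by (simp add: pad_alph_def)

lemma swap_pad: "prod.swap ` pad_alph A \<subseteq> pad_alph A"
  by (auto simp: pad_alph_def)

lemma RF_ApT1:
  assumes A: "finite A" and R: "RF (pad_alph A) M" and MD: "M \<subseteq> {deltaL u v | u v. True}" and x: "x \<in> A"
  shows "RF (pad_alph A) (ApT [x] M)"
proof -
  let ?Sig = "pad_alph A"
  let ?S = "insert None (Some ` ?Sig) \<times> insert None (Some ` ?Sig)"
  have Ml: "M \<subseteq> lists ?Sig" using R unfolding RF_def by simp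
  have fS: "finite ?S" using finite_pad[OF A] by simp
  have s0: "(None, None) \<in> ?S" by simp
  have cl: "\<forall>s\<in>?S. \<forall>a\<in>?Sig. trm s a \<in> ?S" by (auto simp: trm_def)
  have 1: "RF ?Sig {n \<in> lists ?Sig. foldl trm (None, None) n \<in> GF1 x \<and> outw trm out1 (None, None) n \<in> M}"
    by (rule RF_mealy[OF fS s0 cl R])
  have 2: "RF ?Sig {n \<in> lists ?Sig. foldl trm (None, None) n \<in> GF2 x \<and> outw trm out2 (None, None) n \<in> M}"
    by (rule RF_mealy[OF fS s0 cl R])
  show ?thesis unfolding ApT1_eq[OF MD Ml x] by (rule RF_Un[OF 1 2])
qed

lemma ApT_Nil: "M \<subseteq> {deltaL u v | u v. True} \<Longrightarrow> ApT [] M = M"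
  unfolding ApT_def by (auto, blast)

lemma ApT_D: "ApT a M \<subseteq> {deltaL u v | u v. True}"
  unfolding ApT_def by auto

lemma ApT_snoc: "ApT (a @ [x]) M = ApT [x] (ApT a M)"
proof (intro set_eqI iffI)
  fix n assume "n \<in> ApT (a @ [x]) M"
  then obtain w1 w2 where "n = deltaL (w1 @ a @ [x]) w2" "deltaL w1 w2 \<in> M" unfolding ApT_def by auto
  then show "n \<in> ApT [x] (ApT a M)" unfolding ApT_def
    by (metis (mono_tags, lifting) append_assoc mem_Collect_eq)
next
  fix n assume "n \<in> ApT [x] (ApT a M)"
  then obtain u v where uv: "n = deltaL (u @ [x]) v" "deltaL u v \<in> ApT a M" unfolding ApT_def by blast
  then obtain w1 w2 where w: "deltaL u v = deltaL (w1 @ a) w2" "deltaL w1 w2 \<in> M" unfolding ApT_def by blast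
  then have "u = w1 @ a" "v = w2" using dL_inj by blast+
  then have "n = deltaL (w1 @ (a @ [x])) w2" using uv by simp
  then show "n \<in> ApT (a @ [x]) M" using w(2) unfolding ApT_def by blast
qed

lemma RF_ApT:
  assumes A: "finite A" and R: "RF (pad_alph A) M" and MD: "M \<subseteq> {deltaL u v | u v. True}" and a: "set a \<subseteq> A"
  shows "RF (pad_alph A) (ApT a M)"
  using a
proof (induction a rule: rev_induct)
  case Nil then show ?case using R ApT_Nil[OF MD] by simp
next
  case (snoc x a)
  then have "RF (pad_alph A) (ApT a M)" by simp
  then have "RF (pad_alph A) (ApT [x] (ApT a M))" using RF_ApT1[OF A _ ApT_D] snoc.prems by simp
  then show ?case by (simp add: ApT_snoc)
qed

definition ApB :: "'a list \<Rightarrow> ('a option \<times> 'a option) list set \<Rightarrow> ('a option \<times> 'a option) list set" where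
  "ApB b M = {deltaL w1 (w2 @ b) | w1 w2. deltaL w1 w2 \<in> M}"

lemma swL_dL: "deltaL u v \<in> swL M \<longleftrightarrow> deltaL v u \<in> M"
proof
  assume "deltaL u v \<in> swL M"
  then obtain z where z: "z \<in> M" "deltaL u v = map prod.swap z" unfolding swL_def by blast
  then have "map prod.swap (deltaL u v) = z" by (simp add: comp_def)
  then show "deltaL v u \<in> M" using z(1) by (simp add: dL_swap)
next
  assume "deltaL v u \<in> M"
  moreover have "deltaL u v = map prod.swap (deltaL v u)" by (simp add: dL_swap)
  ultimately show "deltaL u v \<in> swL M" unfolding swL_def by blast
qed

lemma ApB_swL: assumes MD: "M \<subseteq> {deltaL u v | u v. True}" shows "ApB b M = swL (ApT b (swL M))"
proof (intro set_eqI iffI)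
  fix n assume "n \<in> ApB b M"
  then obtain w1 w2 where w: "n = deltaL w1 (w2 @ b)" "deltaL w1 w2 \<in> M" unfolding ApB_def by blast
  have "deltaL w2 w1 \<in> swL M" using w(2) by (simp add: swL_dL)
  then have "deltaL (w2 @ b) w1 \<in> ApT b (swL M)" unfolding ApT_def by blast
  then show "n \<in> swL (ApT b (swL M))" using w(1) by (simp add: swL_dL)
next
  fix n assume n: "n \<in> swL (ApT b (swL M))"
  then obtain z where z: "z \<in> ApT b (swL M)" "n = map prod.swap z" unfolding swL_def by blast
  then obtain u v where uv: "z = deltaL (u @ b) v" "deltaL u v \<in> swL M" unfolding ApT_def by blast
  have "n = deltaL v (u @ b)" using z(2) uv(1) by (simp add: dL_swap)
  moreover have "deltaL v u \<in> M" using uv(2) by (simp add: swL_dL)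
  ultimately show "n \<in> ApB b M" unfolding ApB_def by blast
qed

lemma swL_D: "M \<subseteq> {deltaL u v | u v. True} \<Longrightarrow> swL M \<subseteq> {deltaL u v | u v. True}"
  unfolding swL_def using dL_swap by blast

lemma RF_ApB:
  assumes A: "finite A" and R: "RF (pad_alph A) M" and MD: "M \<subseteq> {deltaL u v | u v. True}" and b: "set b \<subseteq> A"
  shows "RF (pad_alph A) (ApB b M)"
proof -
  have "RF (pad_alph A) (swL M)" by (rule RF_swL[OF R swap_pad])
  then have "RF (pad_alph A) (ApT b (swL M))" using RF_ApT[OF A _ swL_D[OF MD] b] by simp
  then have "RF (pad_alph A) (swL (ApT b (swL M)))" by (rule RF_swL[OF _ swap_pad])
  then show ?thesis using ApB_swL[OF MD] by simp
qed

definition Al :: "'a set \<Rightarrow> ('a option \<times> 'a option) set" where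
  "Al A = pad_alph A \<inter> {p. fst p \<noteq> None \<and> snd p \<noteq> None}"

definition padT :: "'a list \<Rightarrow> ('a option \<times> 'a option) list" where
  "padT a = zip (map Some a) (replicate (length a) None)"
definition padB :: "'a list \<Rightarrow> ('a option \<times> 'a option) list" where
  "padB b = zip (replicate (length b) None) (map Some b)"

lemma dL_Al: "length r = length s \<Longrightarrow> set r \<subseteq> A \<Longrightarrow> set s \<subseteq> A \<Longrightarrow> deltaL r s \<in> lists (Al A)"
proof -
  assume l: "length r = length s" and r: "set r \<subseteq> A" and s: "set s \<subseteq> A"
  have "set (deltaL r s) \<subseteq> pad_alph A" using r s by (simp add: dL_set)
  moreover have "\<forall>p\<in>set (deltaL r s). fst p \<noteq> None \<and> snd p \<noteq> None"
  proof
    fix p assume "p \<in> set (deltaL r s)"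
    then have p: "p \<in> set (zip (map Some r) (map Some s))" using l by (simp add: dL_eq)
    have "fst p \<in> set (map Some r)" using p by (metis set_zip_leftD prod.collapse)
    moreover have "snd p \<in> set (map Some s)" using p by (metis set_zip_rightD prod.collapse)
    ultimately show "fst p \<noteq> None \<and> snd p \<noteq> None" by auto
  qed
  ultimately show ?thesis unfolding Al_def by auto
qed

lemma odot_eq:
  assumes Nl: "N \<subseteq> lists (pad_alph A)"
    and bd: "\<forall>w1 w2. deltaL w1 w2 \<in> N \<longrightarrow> \<bar>int (length w1) - int (length w2)\<bar> \<le> int C'"
  shows "odot' M N =
     (\<Union>a\<in>{a. set a \<subseteq> A \<and> length a \<le> C'}. cc (ApT a M) (res N (padT a) \<inter> lists (Al A)))
   \<union> (\<Union>b\<in>{a. set a \<subseteq> A \<and> length a \<le> C'}. cc (ApB b M) (res N (padB b) \<inter> lists (Al A)))"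
    (is "_ = ?U1 \<union> ?U2")
proof (intro set_eqI iffI)
  fix n assume "n \<in> odot' M N"
  then obtain w1 w2 w1' w2' where n: "n = deltaL (w1 @ w1') (w2 @ w2')"
    and m: "deltaL w1 w2 \<in> M" and m': "deltaL w1' w2' \<in> N" unfolding odot'_def by blast
  have "set (deltaL w1' w2') \<subseteq> pad_alph A" using m' Nl by auto
  then have A': "set w1' \<subseteq> A" "set w2' \<subseteq> A" by (simp_all add: dL_set)
  have b: "\<bar>int (length w1') - int (length w2')\<bar> \<le> int C'" using bd m' by blast
  show "n \<in> ?U1 \<union> ?U2"
  proof (cases "length w2' \<le> length w1'")
    case True
    define k where "k = length w1' - length w2'"
    define a where "a = take k w1'"
    define r where "r = drop k w1'"
    have w1': "w1' = a @ r" unfolding a_def r_def by simp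
    have la: "length a = k" unfolding a_def k_def by simp
    have lr: "length r = length w2'" unfolding r_def k_def using True by simp
    have kC: "k \<le> C'" using b True unfolding k_def by linarith
    have aA: "set a \<subseteq> A" "set r \<subseteq> A" using A'(1) unfolding w1' by auto
    have "padT a @ deltaL r w2' = deltaL w1' w2'" unfolding padT_def w1' using dL_padT[OF lr] by simp
    then have t1: "deltaL r w2' \<in> res N (padT a)" using m' by (simp add: res_def)
    have t2: "deltaL r w2' \<in> lists (Al A)" by (rule dL_Al[OF lr aA(2) A'(2)])
    have u: "deltaL (w1 @ a) w2 \<in> ApT a M" using m unfolding ApT_def by blast
    have "n = deltaL (w1 @ a) w2 @ deltaL r w2'" unfolding n w1' using dL_app[OF lr, of "w1 @ a" w2] by simp
    then have "n \<in> cc (ApT a M) (res N (padT a) \<inter> lists (Al A))"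
      using u t1 t2 unfolding cc_def by blast
    moreover have "a \<in> {a. set a \<subseteq> A \<and> length a \<le> C'}" using aA la kC by simp
    ultimately show ?thesis by blast
  next
    case False
    define k where "k = length w2' - length w1'"
    define c where "c = take k w2'"
    define s where "s = drop k w2'"
    have w2': "w2' = c @ s" unfolding c_def s_def by simp
    have lc: "length c = k" unfolding c_def k_def by simp
    have ls: "length w1' = length s" unfolding s_def k_def using False by simp
    have kC: "k \<le> C'" using b False unfolding k_def by linarith
    have cA: "set c \<subseteq> A" "set s \<subseteq> A" using A'(2) unfolding w2' by auto
    have "padB c @ deltaL w1' s = deltaL w1' w2'" unfolding padB_def w2' using dL_padB[OF ls] by simp
    then have t1: "deltaL w1' s \<in> res N (padB c)" using m' by (simp add: res_def)
    have t2: "deltaL w1' s \<in> lists (Al A)" by (rule dL_Al[OF ls A'(1) cA(2)])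
    have u: "deltaL w1 (w2 @ c) \<in> ApB c M" using m unfolding ApB_def by blast
    have "n = deltaL w1 (w2 @ c) @ deltaL w1' s" unfolding n w2' using dL_app[OF ls, of w1 "w2 @ c"] by simp
    then have "n \<in> cc (ApB c M) (res N (padB c) \<inter> lists (Al A))"
      using u t1 t2 unfolding cc_def by blast
    moreover have "c \<in> {a. set a \<subseteq> A \<and> length a \<le> C'}" using cA lc kC by simp
    ultimately show ?thesis by blast
  qed
next
  fix n assume "n \<in> ?U1 \<union> ?U2"
  then show "n \<in> odot' M N"
  proof
    assume "n \<in> ?U1"
    then obtain a u t where n: "n = u @ t" and u: "u \<in> ApT a M" and t: "t \<in> res N (padT a)" "t \<in> lists (Al A)"
      unfolding cc_def by blast
    obtain w1 w2 where w: "u = deltaL (w1 @ a) w2" "deltaL w1 w2 \<in> M" using u unfolding ApT_def by blast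
    have "\<forall>p\<in>set t. fst p \<noteq> None \<and> snd p \<noteq> None" using t(2) unfolding Al_def by auto
    then obtain r s where rs: "length r = length s" "t = deltaL r s" using aligned_dL by blast
    have "deltaL (a @ r) s \<in> N" using t(1) dL_padT[OF rs(1), of a] rs(2) unfolding res_def padT_def by simp
    moreover have "n = deltaL (w1 @ (a @ r)) (w2 @ s)" unfolding n w(1) rs(2) using dL_app[OF rs(1)] by simp
    ultimately show ?thesis using w(2) unfolding odot'_def by blast
  next
    assume "n \<in> ?U2"
    then obtain c u t where n: "n = u @ t" and u: "u \<in> ApB c M" and t: "t \<in> res N (padB c)" "t \<in> lists (Al A)"
      unfolding cc_def by blast
    obtain w1 w2 where w: "u = deltaL w1 (w2 @ c)" "deltaL w1 w2 \<in> M" using u unfolding ApB_def by blast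
    have "\<forall>p\<in>set t. fst p \<noteq> None \<and> snd p \<noteq> None" using t(2) unfolding Al_def by auto
    then obtain r s where rs: "length r = length s" "t = deltaL r s" using aligned_dL by blast
    have "deltaL r (c @ s) \<in> N" using t(1) dL_padB[OF rs(1), of c] rs(2) unfolding res_def padB_def by simp
    moreover have "n = deltaL (w1 @ r) (w2 @ (c @ s))" unfolding n w(1) rs(2) using dL_app[OF rs(1)] by simp
    ultimately show ?thesis using w(2) unfolding odot'_def by blast
  qed
qed

theorem mainTheorem3:
  fixes A :: "'a set"
    and M N :: "('a option \<times> 'a option) list set"
    and C C' :: nat
  assumes "finite A"
    and "regular (pad_alph A) M"
    and "regular (pad_alph A) N"
    and "M \<subseteq> {deltaL w1 w2 | w1 w2. w1 \<in> lists A \<and> w2 \<in> lists A}"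
    and "N \<subseteq> {deltaL w1 w2 | w1 w2. w1 \<in> lists A \<and> w2 \<in> lists A}"
    and "\<forall>w1 w2. deltaL w1 w2 \<in> M \<longrightarrow> \<bar>int (length w1) - int (length w2)\<bar> \<le> int C"
    and "\<forall>w1 w2. deltaL w1 w2 \<in> N \<longrightarrow> \<bar>int (length w1) - int (length w2)\<bar> \<le> int C'"
  shows "regular (pad_alph A) (odot' M N)"
proof -
  have RM: "RF (pad_alph A) M" using assms(2) by (rule regular_RF)
  have RN: "RF (pad_alph A) N" using assms(3) by (rule regular_RF)
  have MD: "M \<subseteq> {deltaL u v | u v. True}" using assms(4) by blast
  have Nl: "N \<subseteq> lists (pad_alph A)" using RN unfolding RF_def by simp
  have fI: "finite {a. set a \<subseteq> A \<and> length a \<le> C'}" by (rule finite_lists_length_le[OF assms(1)])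
  have RAl: "RF (pad_alph A) (lists (Al A))" by (rule RF_lists) (auto simp: Al_def)
  have 1: "RF (pad_alph A) (\<Union>a\<in>{a. set a \<subseteq> A \<and> length a \<le> C'}. cc (ApT a M) (res N (padT a) \<inter> lists (Al A)))"
  proof (rule RF_UN[OF fI])
    fix a assume "a \<in> {a. set a \<subseteq> A \<and> length a \<le> C'}"
    then have a: "set a \<subseteq> A" by simp
    show "RF (pad_alph A) (cc (ApT a M) (res N (padT a) \<inter> lists (Al A)))"
      by (rule RF_cc[OF RF_ApT[OF assms(1) RM MD a] RF_Int[OF RF_res[OF RN] RAl]])
  qed
  have 2: "RF (pad_alph A) (\<Union>a\<in>{a. set a \<subseteq> A \<and> length a \<le> C'}. cc (ApB a M) (res N (padB a) \<inter> lists (Al A)))"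
  proof (rule RF_UN[OF fI])
    fix a assume "a \<in> {a. set a \<subseteq> A \<and> length a \<le> C'}"
    then have a: "set a \<subseteq> A" by simp
    show "RF (pad_alph A) (cc (ApB a M) (res N (padB a) \<inter> lists (Al A)))"
      by (rule RF_cc[OF RF_ApB[OF assms(1) RM MD a] RF_Int[OF RF_res[OF RN] RAl]])
  qed
  have "RF (pad_alph A) (odot' M N)"
    unfolding odot_eq[OF Nl assms(7)] by (rule RF_Un[OF 1 2])
  then show ?thesis by (rule RF_regular)
qed

end
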